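(* Consider the linear regression model $y=X\theta+u$ (context) with fixed $\sigma>0$. Suppose that for a given $i\ge1$ with $i\le k=k(n)$ for all large enough $n$, the tuning parameters satisfy $\xi_{i,n}\eta_{i,n}\to0$ and $n^{1/2}\eta_{i,n}\to\infty$. Let $\hat\theta_i$ denote any one of $\hat\theta_{H,i}$, $\hat\theta_{S,i}$, $\hat\theta_{AS,i}$, and for $d\ge0$ let $D_{i,n}=[\hat\theta_i-\sigma d\xi_{i,n}\eta_{i,n},\hat\theta_i+\sigma d\xi_{i,n}\eta_{i,n}]$. Then $\lim_{n\to\infty}\inf_{\theta\in\mathbb{R}^k}P_{n,\theta,\sigma}(\theta_i\in D_{i,n})$ equals $1$ if $d>1$, equals $1/2$ if $d=1$, and equals $0$ if $d<1$.
   Context: Model: for each sample size $n$, $y=X\theta+u$ with $y\in\mathbb{R}^n$, $X$ a non-stochastic $n\times k$ matrix of rank $k\ge1$ ($k=k(n)$ and all entries may depend on $n$), $\theta\in\mathbb{R}^k$, $u\sim N(0,\sigma^2I_n)$. $P_{n,\theta,\sigma}$ is the probability under $(\theta,\sigma)$ at sample size $n$. $\hat\theta_{LS}=(X'X)^{-1}X'y$. $\xi_{i,n}\ge0$ with $\xi_{i,n}^2=((X'X/n)^{-1})_{ii}$. Standing assumption for asymptotic results: $\sup_n\xi_{i,n}^2/n<\infty$ for every fixed $i$ with $i\le k(n)$ for large $n$. Tuning parameters $\eta_{i,n}>0$. Estimators: $\hat\theta_{H,i}=\hat\theta_{LS,i}\mathbf{1}(|\hat\theta_{LS,i}|>\sigma\xi_{i,n}\eta_{i,n})$;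 $\hat\theta_{S,i}=\operatorname{sgn}(\hat\theta_{LS,i})(|\hat\theta_{LS,i}|-\sigma\xi_{i,n}\eta_{i,n})_+$; $\hat\theta_{AS,i}=\hat\theta_{LS,i}(1-\sigma^2\xi_{i,n}^2\eta_{i,n}^2/\hat\theta_{LS,i}^2)_+$. *)

theory Defs
  imports "HOL-Probability.Probability" "Jordan_Normal_Form.DL_Rank" "Jordan_Normal_Form.Gauss_Jordan_Elimination"
begin

definition ls_est :: "real mat \<Rightarrow> real vec \<Rightarrow> real vec" where
  "ls_est X y = mult_mat_vec (the (mat_inverse (transpose_mat X * X))) (mult_mat_vec (transpose_mat X) y)"

text \<open>xi_{i,n} = sqrt of the i-th diagonal entry of (X'X/n)^{-1} (indices 0-based).\<close>
definition xi :: "real mat \<Rightarrow> nat \<Rightarrow> nat \<Rightarrow> real" where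
  "xi X n i = sqrt (the (mat_inverse ((1 / real n) \<cdot>\<^sub>m (transpose_mat X * X))) $$ (i, i))"

text \<open>Componentwise estimators as functions of the LS coordinate b and the threshold t.\<close>
definition hard_thr :: "real \<Rightarrow> real \<Rightarrow> real" where
  "hard_thr b t = (if \<bar>b\<bar> > t then b else 0)"

definition soft_thr :: "real \<Rightarrow> real \<Rightarrow> real" where
  "soft_thr b t = sgn b * max (\<bar>b\<bar> - t) 0"

definition adapt_soft_thr :: "real \<Rightarrow> real \<Rightarrow> real" where
  "adapt_soft_thr b t = b * max (1 - t\<^sup>2 / b\<^sup>2) 0"

definition noise :: "nat \<Rightarrow> real \<Rightarrow> (nat \<Rightarrow> real) measure" where
  "noise n \<sigma> = PiM {..<n} (\<lambda>_. density lborel (normal_density 0 \<sigma>))"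

definition coverage ::
  "(real \<Rightarrow> real \<Rightarrow> real) \<Rightarrow> real mat \<Rightarrow> nat \<Rightarrow> real \<Rightarrow> real \<Rightarrow> real \<Rightarrow> nat \<Rightarrow> real vec \<Rightarrow> real" where
  "coverage est X n \<sigma> \<eta> d i \<theta> =
     measure (noise n \<sigma>)
       {u \<in> space (noise n \<sigma>).
          let y = mult_mat_vec X \<theta> + Matrix.vec n u;
              b = vec_index (ls_est X y) i;
              t = \<sigma> * xi X n i * \<eta>;
              e = est b t
          in e - \<sigma> * d * xi X n i * \<eta> \<le> vec_index \<theta> i \<and> vec_index \<theta> i \<le> e + \<sigma> * d * xi X n i * \<eta>}"

end

theory Submission
  imports Defs
begin

lemma full_col_rank_inj:
  fixes X :: "real mat"
  assumes X: "X \<in> carrier_mat n k" and r: "vec_space.rank n X = k"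
    and v: "v \<in> carrier_vec k" and z: "X *\<^sub>v v = 0\<^sub>v n"
  shows "v = 0\<^sub>v k"
proof -
  interpret vs: vec_space "TYPE(real)" n .
  have dist: "distinct (cols X)"
  proof (rule ccontr)
    assume nd: "\<not> distinct (cols X)"
    obtain S where S: "maximal S (\<lambda>T. T \<subseteq> set (cols X) \<and> vs.lin_indpt T)"
      using maximal_exists[of "(\<lambda>T. T \<subseteq> set (cols X) \<and> vs.lin_indpt T)" "card (set (cols X))" "{}"]
      by (meson List.finite_set card_mono empty_iff empty_subsetI vs.finite_lin_indpt2 rev_finite_subset)
    then have "card S \<le> card (set (cols X))" by (simp add: card_mono maximal_def)
    moreover have "card (set (cols X)) < k"
      using X nd card_distinct cols_length card_length carrier_matD(2) nat_less_le by metis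
    ultimately show False using vs.rank_card_indpt[OF X S] r by simp
  qed
  have li: "vs.lin_indpt (set (cols X))" using vs.full_rank_lin_indpt[OF X r dist] .
  show ?thesis
  proof (rule ccontr)
    assume "v \<noteq> 0\<^sub>v k"
    from vs.lin_depI[OF X v this z dist] li show False by blast
  qed
qed

lemma self_scalar_zero:
  fixes w :: "real vec"
  assumes "w \<bullet> w = 0" "w \<in> carrier_vec n"
  shows "w = 0\<^sub>v n"
proof -
  have "(\<Sum>i\<in>{0..<n}. w $ i * w $ i) = 0" using assms by (simp add: scalar_prod_def)
  then have "\<forall>i\<in>{0..<n}. w $ i * w $ i = 0"
    by (subst (asm) sum_nonneg_eq_0_iff) auto
  then show ?thesis using assms by (intro eq_vecI) auto
qed

lemma gram_det:
  fixes X :: "real mat"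
  assumes X: "X \<in> carrier_mat n k" and r: "vec_space.rank n X = k"
  shows "det (transpose_mat X * X) \<noteq> 0"
proof
  have G: "transpose_mat X * X \<in> carrier_mat k k" using X by auto
  assume "det (transpose_mat X * X) = 0"
  then obtain v where v: "v \<in> carrier_vec k" "v \<noteq> 0\<^sub>v k" "(transpose_mat X * X) *\<^sub>v v = 0\<^sub>v k"
    using det_0_iff_vec_prod_zero_field[OF G] by blast
  have Xv: "X *\<^sub>v v \<in> carrier_vec n" using X v by auto
  have "(transpose_mat X *\<^sub>v (X *\<^sub>v v)) \<bullet> v = (X *\<^sub>v v) \<bullet> (X *\<^sub>v v)"
    by (rule transpose_vec_mult_scalar[OF X v(1) Xv])
  moreover have "transpose_mat X *\<^sub>v (X *\<^sub>v v) = 0\<^sub>v k" using v X by (simp flip: assoc_mult_mat_vec)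
  ultimately have "(X *\<^sub>v v) \<bullet> (X *\<^sub>v v) = 0" using v by simp
  then have "X *\<^sub>v v = 0\<^sub>v n" using self_scalar_zero Xv by blast
  then show False using full_col_rank_inj[OF X r v(1)] v(2) by blast
qed

lemma gram_inverse:
  fixes X :: "real mat"
  assumes X: "X \<in> carrier_mat n k" and r: "vec_space.rank n X = k"
  obtains A where "mat_inverse (transpose_mat X * X) = Some A" "A \<in> carrier_mat k k"
    "transpose_mat X * X * A = 1\<^sub>m k" "A * (transpose_mat X * X) = 1\<^sub>m k"
proof -
  have G: "transpose_mat X * X \<in> carrier_mat k k" using X by auto
  have U: "transpose_mat X * X \<in> Units (ring_mat TYPE(real) k ())"
    using det_non_zero_imp_unit[OF G gram_det[OF X r], where b="()"] .
  show ?thesis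
  proof (cases "mat_inverse (transpose_mat X * X)")
    case None
    then show ?thesis using mat_inverse(1)[OF G, where b="()"] U by blast
  next
    case (Some A)
    then show ?thesis using mat_inverse(2)[OF G Some] that by blast
  qed
qed

lemma xi_eq:
  fixes X :: "real mat"
  assumes X: "X \<in> carrier_mat n k" and n: "n > 0"
    and A: "A \<in> carrier_mat k k" "transpose_mat X * X * A = 1\<^sub>m k" "A * (transpose_mat X * X) = 1\<^sub>m k"
    and dG: "det (transpose_mat X * X) \<noteq> 0" and i: "i < k"
  shows "xi X n i = sqrt (real n * A $$ (i, i))"
proof -
  let ?G = "transpose_mat X * X"
  have G: "?G \<in> carrier_mat k k" using X by auto
  let ?H = "(1 / real n) \<cdot>\<^sub>m ?G"
  have H: "?H \<in> carrier_mat k k" using G by auto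
  have "det ?H \<noteq> 0" using dG n G by (simp add: det_smult)
  then have U: "?H \<in> Units (ring_mat TYPE(real) k ())"
    using det_non_zero_imp_unit[OF H, where b="()"] by blast
  obtain B where B: "mat_inverse ?H = Some B"
    using mat_inverse(1)[OF H, where b="()"] U by (cases "mat_inverse ?H") auto
  from mat_inverse(2)[OF H B] have B1: "B * ?H = 1\<^sub>m k" and Bc: "B \<in> carrier_mat k k" by auto
  have "?H * (real n \<cdot>\<^sub>m A) = (1 / real n) \<cdot>\<^sub>m (?G * (real n \<cdot>\<^sub>m A))"
    using G A by (intro mult_smult_assoc_mat) auto
  also have "\<dots> = (1 / real n) \<cdot>\<^sub>m (real n \<cdot>\<^sub>m (?G * A))"
    using G A by (subst mult_smult_distrib) auto
  also have "\<dots> = 1\<^sub>m k" using A(2) n by (intro eq_matI) auto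
  finally have HA: "?H * (real n \<cdot>\<^sub>m A) = 1\<^sub>m k" .
  have "B = B * (?H * (real n \<cdot>\<^sub>m A))" using HA Bc by simp
  also have "\<dots> = (B * ?H) * (real n \<cdot>\<^sub>m A)" by (rule assoc_mult_mat[symmetric, OF Bc H smult_carrier_mat[OF A(1)]])
  also have "\<dots> = real n \<cdot>\<^sub>m A" using B1 A by simp
  finally have "B = real n \<cdot>\<^sub>m A" .
  then show ?thesis unfolding xi_def using B A(1) i by simp
qed

lemma mv_index:
  fixes C :: "real mat"
  assumes C: "C \<in> carrier_mat k n" and i: "i < k"
  shows "(C *\<^sub>v Matrix.vec n u) $ i = (\<Sum>j<n. C $$ (i, j) * u j)"
proof -
  have "(C *\<^sub>v Matrix.vec n u) $ i = row C i \<bullet> Matrix.vec n u" using assms by simp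
  also have "\<dots> = (\<Sum>j\<in>{0..<n}. row C i $ j * u j)" by (simp add: scalar_prod_def)
  also have "\<dots> = (\<Sum>j<n. C $$ (i, j) * u j)" using assms by (auto simp: atLeast0LessThan intro!: sum.cong)
  finally show ?thesis .
qed

lemma mmt_index:
  fixes C :: "real mat"
  assumes C: "C \<in> carrier_mat k n" and i: "i < k"
  shows "(C * transpose_mat C) $$ (i, i) = (\<Sum>j<n. (C $$ (i, j))\<^sup>2)"
proof -
  have "(C * transpose_mat C) $$ (i, i) = row C i \<bullet> col (transpose_mat C) i" using assms by simp
  also have "\<dots> = (\<Sum>j\<in>{0..<n}. row C i $ j * col (transpose_mat C) i $ j)" using assms by (simp add: scalar_prod_def)
  also have "\<dots> = (\<Sum>j<n. (C $$ (i, j))\<^sup>2)" using assms by (auto simp: atLeast0LessThan power2_eq_square intro!: sum.cong)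
  finally show ?thesis .
qed

lemma mm_index:
  fixes C :: "real mat"
  assumes C: "C \<in> carrier_mat k n" and X: "X \<in> carrier_mat n k" and i: "i < k"
  shows "(C * X) $$ (i, i) = (\<Sum>j<n. C $$ (i, j) * X $$ (j, i))"
proof -
  have "(C * X) $$ (i, i) = row C i \<bullet> col X i" using assms by simp
  also have "\<dots> = (\<Sum>j\<in>{0..<n}. row C i $ j * col X i $ j)" using assms by (simp add: scalar_prod_def)
  also have "\<dots> = (\<Sum>j<n. C $$ (i, j) * X $$ (j, i))" using assms by (auto simp: atLeast0LessThan intro!: sum.cong)
  finally show ?thesis .
qed

lemma ls_decomp:
  fixes X :: "real mat"
  assumes X: "X \<in> carrier_mat n k" and A: "A \<in> carrier_mat k k"
    and inv: "mat_inverse (transpose_mat X * X) = Some A" and AG: "A * (transpose_mat X * X) = 1\<^sub>m k"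
    and th: "\<theta> \<in> carrier_vec k" and i: "i < k"
  shows "ls_est X (X *\<^sub>v \<theta> + Matrix.vec n u) $ i = \<theta> $ i + (\<Sum>j<n. (A * transpose_mat X) $$ (i, j) * u j)"
proof -
  have Xt: "transpose_mat X \<in> carrier_mat k n" using X by auto
  have Xth: "X *\<^sub>v \<theta> \<in> carrier_vec n" using X th by auto
  have un: "Matrix.vec n u \<in> carrier_vec n" by auto
  have "ls_est X (X *\<^sub>v \<theta> + Matrix.vec n u) = A *\<^sub>v (transpose_mat X *\<^sub>v (X *\<^sub>v \<theta> + Matrix.vec n u))"
    unfolding ls_est_def using inv by simp
  also have "\<dots> = A *\<^sub>v (transpose_mat X *\<^sub>v (X *\<^sub>v \<theta>)) + A *\<^sub>v (transpose_mat X *\<^sub>v Matrix.vec n u)"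
    using Xt A Xth un by (simp add: mult_add_distrib_mat_vec)
  also have "A *\<^sub>v (transpose_mat X *\<^sub>v (X *\<^sub>v \<theta>)) = (A * (transpose_mat X * X)) *\<^sub>v \<theta>"
    using assoc_mult_mat_vec[OF A _ th, of "transpose_mat X * X"] assoc_mult_mat_vec[OF Xt X th] X by simp
  also have "\<dots> = \<theta>" using AG th by simp
  also have "A *\<^sub>v (transpose_mat X *\<^sub>v Matrix.vec n u) = (A * transpose_mat X) *\<^sub>v Matrix.vec n u"
    using A Xt un by simp
  finally have eq: "ls_est X (X *\<^sub>v \<theta> + Matrix.vec n u) = \<theta> + (A * transpose_mat X) *\<^sub>v Matrix.vec n u" .
  have AX: "A * transpose_mat X \<in> carrier_mat k n" using A Xt by auto
  have "((A * transpose_mat X) *\<^sub>v Matrix.vec n u) $ i = (\<Sum>j<n. (A * transpose_mat X) $$ (i, j) * u j)"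
    using mv_index[OF AX i] .
  moreover have "(\<theta> + (A * transpose_mat X) *\<^sub>v Matrix.vec n u) $ i = \<theta> $ i + ((A * transpose_mat X) *\<^sub>v Matrix.vec n u) $ i"
    using AX i by (subst index_add_vec(1)) auto
  ultimately show ?thesis using eq by simp
qed

lemma var_eq:
  fixes X :: "real mat"
  assumes X: "X \<in> carrier_mat n k" and A: "A \<in> carrier_mat k k"
    and AG: "A * (transpose_mat X * X) = 1\<^sub>m k" and i: "i < k"
  shows "(\<Sum>j<n. ((A * transpose_mat X) $$ (i, j))\<^sup>2) = A $$ (i, i)"
    and "\<exists>j<n. (A * transpose_mat X) $$ (i, j) \<noteq> 0"
proof -
  let ?C = "A * transpose_mat X"
  have Xt: "transpose_mat X \<in> carrier_mat k n" using X by auto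
  have C: "?C \<in> carrier_mat k n" using A Xt by auto
  have "?C * transpose_mat ?C = A * transpose_mat X * (X * transpose_mat A)"
    using A X by (simp add: transpose_mult)
  also have "\<dots> = (A * (transpose_mat X * X)) * transpose_mat A"
  proof -
    have At: "transpose_mat A \<in> carrier_mat k k" using A by auto
    have XA: "X * transpose_mat A \<in> carrier_mat n k" using X At by auto
    have G: "transpose_mat X * X \<in> carrier_mat k k" using X by auto
    show ?thesis
      using assoc_mult_mat[OF A Xt XA] assoc_mult_mat[OF A G At] assoc_mult_mat[OF Xt X At] by simp
  qed
  also have "\<dots> = transpose_mat A" using AG A by simp
  finally have CC: "?C * transpose_mat ?C = transpose_mat A" .
  have "(?C * transpose_mat ?C) $$ (i, i) = (\<Sum>j<n. (?C $$ (i, j))\<^sup>2)"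
    using mmt_index[OF C i] .
  then show "(\<Sum>j<n. (?C $$ (i, j))\<^sup>2) = A $$ (i, i)" using CC A i by simp
  show "\<exists>j<n. ?C $$ (i, j) \<noteq> 0"
  proof (rule ccontr)
    assume "\<not> (\<exists>j<n. ?C $$ (i, j) \<noteq> 0)"
    then have z: "\<forall>j<n. ?C $$ (i, j) = 0" by auto
    have "?C * X = 1\<^sub>m k" using AG A X Xt by (simp add: assoc_mult_mat)
    then have "(?C * X) $$ (i, i) = 1" using i by simp
    moreover have "(?C * X) $$ (i, i) = (\<Sum>j<n. ?C $$ (i, j) * X $$ (j, i))"
      using mm_index[OF C X i] .
    ultimately show False using z by simp
  qed
qed

lemma noise_prob: "\<sigma> > 0 \<Longrightarrow> prob_space (noise n \<sigma>)"
  unfolding noise_def by (intro prob_space_PiM prob_space_normal_density)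

lemma noise_indep:
  assumes s: "\<sigma> > 0" and n: "n > 0"
  shows "prob_space.indep_vars (noise n \<sigma>) (\<lambda>_. borel) (\<lambda>j u. u j) {..<n}"
proof -
  let ?N = "density lborel (normal_density 0 \<sigma>)"
  let ?M = "noise n \<sigma>"
  interpret M: prob_space ?M using noise_prob[OF s] .
  have Mdef: "?M = PiM {..<n} (\<lambda>_. ?N)" by (simp add: noise_def)
  have sN: "sets ?N = sets borel" by simp
  have comp: "distr ?M borel (\<lambda>x. x j) = ?N" if "j < n" for j
  proof -
    have "distr ?M borel (\<lambda>x. x j) = distr ?M ?N (\<lambda>x. x j)"
      by (rule distr_cong) auto
    also have "\<dots> = ?N" unfolding Mdef
      by (rule distr_PiM_component) (use that s prob_space_normal_density in auto)
    finally show ?thesis .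
  qed
  show ?thesis
  proof (subst M.indep_vars_iff_distr_eq_PiM')
    show "{..<n} \<noteq> {}" using n by auto
    show "(\<lambda>u. u j) \<in> measurable ?M borel" if "j \<in> {..<n}" for j
    proof -
      have "(\<lambda>u. u j) \<in> measurable (PiM {..<n} (\<lambda>_. ?N)) ?N"
        by (rule measurable_component_singleton) (use that in auto)
      then show ?thesis using measurable_cong_sets[OF refl sN] by (simp add: noise_def)
    qed
    have "distr ?M (PiM {..<n} (\<lambda>_. borel)) (\<lambda>x. restrict x {..<n}) = distr ?M ?M (\<lambda>x. x)"
    proof (rule distr_cong)
      show "sets (PiM {..<n} (\<lambda>_. borel)) = sets ?M" unfolding Mdef
        by (rule sets_PiM_cong) auto
      show "restrict x {..<n} = x" if "x \<in> space ?M" for x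
        using that unfolding Mdef by (auto simp: space_PiM PiE_def extensional_restrict)
    qed simp
    also have "\<dots> = ?M" by simp
    also have "\<dots> = PiM {..<n} (\<lambda>i. distr ?M borel (\<lambda>x. x i))"
      unfolding Mdef[symmetric] by (subst Mdef) (rule PiM_cong; simp add: comp)
    finally show "distr ?M (PiM {..<n} (\<lambda>_. borel)) (\<lambda>x. restrict x {..<n}) =
        PiM {..<n} (\<lambda>i. distr ?M borel (\<lambda>x. x i))" .
  qed
qed

lemma noise_comp:
  assumes s: "\<sigma> > 0" and j: "j < n"
  shows "distributed (noise n \<sigma>) lborel (\<lambda>u. u j) (normal_density 0 \<sigma>)"
proof -
  let ?N = "density lborel (normal_density 0 \<sigma>)"
  have sN: "sets ?N = sets lborel" by simp
  have m: "(\<lambda>u. u j) \<in> measurable (PiM {..<n} (\<lambda>_. ?N)) ?N"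
    by (rule measurable_component_singleton) (use j in auto)
  have "distr (noise n \<sigma>) lborel (\<lambda>x. x j) = distr (noise n \<sigma>) ?N (\<lambda>x. x j)"
    by (rule distr_cong) auto
  also have "\<dots> = ?N" unfolding noise_def
    by (rule distr_PiM_component) (use j s prob_space_normal_density in auto)
  finally show ?thesis unfolding distributed_def using m measurable_cong_sets[OF refl sN]
    by (simp add: noise_def)
qed

lemma lincomb_normal:
  assumes s: "\<sigma> > 0" and c: "\<exists>j<n. c j \<noteq> 0"
  shows "distributed (noise n \<sigma>) lborel (\<lambda>u. \<Sum>j<n. c j * u j)
           (normal_density 0 (\<sigma> * sqrt (\<Sum>j<n. (c j)\<^sup>2)))"
proof -
  interpret M: prob_space "noise n \<sigma>" using noise_prob[OF s] .
  from c have n: "n > 0" by auto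
  define J where "J = {j. j < n \<and> c j \<noteq> 0}"
  have J: "finite J" "J \<noteq> {}" "J \<subseteq> {..<n}" using c by (auto simp: J_def)
  have ind: "M.indep_vars (\<lambda>_. borel) (\<lambda>j u. c j * u j) J"
    by (rule M.indep_vars_compose2[OF M.indep_vars_subset[OF noise_indep[OF s n] J(3)]]) auto
  have aff: "distributed (noise n \<sigma>) lborel (\<lambda>u. c j * u j) (normal_density 0 (\<bar>c j\<bar> * \<sigma>))"
    if "j \<in> J" for j
  proof -
    have "c j \<noteq> 0" "j < n" using that by (auto simp: J_def)
    from M.normal_density_affine[OF noise_comp[OF s \<open>j < n\<close>] s \<open>c j \<noteq> 0\<close>, of 0]
    show ?thesis by simp
  qed
  have "distributed (noise n \<sigma>) lborel (\<lambda>x. \<Sum>j\<in>J. c j * x j)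
      (normal_density (\<Sum>j\<in>J. 0) (sqrt (\<Sum>j\<in>J. (\<bar>c j\<bar> * \<sigma>)\<^sup>2)))"
    by (rule M.sum_indep_normal[OF J(1) J(2) ind]) (use s in \<open>auto simp: J_def intro: aff\<close>)
  moreover have "(\<lambda>x. \<Sum>j\<in>J. c j * x j) = (\<lambda>u. \<Sum>j<n. c j * u j)"
    by (rule ext, rule sum.mono_neutral_left) (auto simp: J_def)
  moreover have "(\<Sum>j\<in>J. (\<bar>c j\<bar> * \<sigma>)\<^sup>2) = \<sigma>\<^sup>2 * (\<Sum>j<n. (c j)\<^sup>2)"
  proof -
    have "(\<Sum>j\<in>J. (\<bar>c j\<bar> * \<sigma>)\<^sup>2) = (\<Sum>j<n. (\<bar>c j\<bar> * \<sigma>)\<^sup>2)"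
      by (rule sum.mono_neutral_left) (auto simp: J_def)
    also have "\<dots> = \<sigma>\<^sup>2 * (\<Sum>j<n. (c j)\<^sup>2)"
      by (simp add: sum_distrib_left power_mult_distrib mult.commute)
    finally show ?thesis .
  qed
  moreover have "sqrt (\<sigma>\<^sup>2 * (\<Sum>j<n. (c j)\<^sup>2)) = \<sigma> * sqrt (\<Sum>j<n. (c j)\<^sup>2)"
    using s by (simp add: real_sqrt_mult)
  ultimately show ?thesis by simp
qed

abbreviation SN :: "real measure" where "SN \<equiv> density lborel std_normal_density"

definition Phi :: "real \<Rightarrow> real" where "Phi = cdf SN"

lemma SN_prob: "prob_space SN"
  by (rule prob_space_normal_density) simp

lemma SN_real_distribution: "real_distribution SN"
  unfolding real_distribution_def real_distribution_axioms_def using SN_prob by simp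

interpretation SN: real_distribution SN by (rule SN_real_distribution)

lemma Phi_top: "(Phi \<longlongrightarrow> 1) at_top"
  unfolding Phi_def by (rule SN.cdf_lim_at_top_prob)

lemma Phi_bot: "(Phi \<longlongrightarrow> 0) at_bot"
  unfolding Phi_def by (rule SN.cdf_lim_at_bot)

lemma SN_singleton: "measure SN {a} = 0"
proof -
  have ae: "AE x in lborel. x \<in> {a} \<longrightarrow> std_normal_density x = 0"
    using AE_lborel_singleton[of a] by eventually_elim auto
  have "{a} \<in> null_sets SN"
    by (subst null_sets_density_iff) (use ae in auto)
  then show ?thesis by (simp add: measure_def null_setsD1)
qed

lemma Phi_cont: "isCont Phi x"
  unfolding Phi_def using SN.isCont_cdf SN_singleton by blast

lemma Phi_diff: "a < b \<Longrightarrow> measure SN {a<..b} = Phi b - Phi a"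
  unfolding Phi_def using SN.cdf_diff_eq by simp

lemma Phi_upper: "measure SN {a<..} = 1 - Phi a"
proof -
  have "measure SN {a<..} = measure SN (UNIV - {..a})" by (simp add: Compl_eq_Diff_UNIV[symmetric])
  also have "\<dots> = 1 - measure SN {..a}"
    using SN.prob_compl[of "{..a}"] by simp
  finally show ?thesis unfolding Phi_def cdf_def by simp
qed

lemma Phi_0: "Phi 0 = 1 / 2"
proof -
  have d1: "distributed SN lborel (\<lambda>x. x) std_normal_density"
    unfolding distributed_def by (auto simp: distr_id2)
  have "distributed SN lborel (\<lambda>x. 0 + (-1) * x) (normal_density (0 + (-1) * 0) (\<bar>-1\<bar> * 1))"
    by (rule SN.normal_density_affine[OF d1]) auto
  then have "distr SN lborel uminus = SN"
    unfolding distributed_def by (simp add: fun_eq_iff)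
  then have "measure SN {..0} = measure (distr SN lborel uminus) {..0}" by simp
  also have "\<dots> = measure SN (uminus -` {..0} \<inter> space SN)"
    by (rule measure_distr) auto
  also have "uminus -` {..0} \<inter> space SN = {0..}" by auto
  finally have e: "measure SN {..0} = measure SN {0..}" .
  have "{0::real..} = {0} \<union> {0<..}" by auto
  then have "measure SN {0..} = measure SN ({0} \<union> {0<..})" by simp
  also have "\<dots> = measure SN {0} + measure SN {0<..}"
    by (rule SN.finite_measure_Union) auto
  also have "\<dots> = 1 - Phi 0" using SN_singleton Phi_upper by simp
  finally show ?thesis using e unfolding Phi_def cdf_def by simp
qed

lemma as_cases:
  assumes t: "t > 0"
  shows "\<bar>b\<bar> \<le> t \<Longrightarrow> adapt_soft_thr b t = 0"
    and "\<bar>b\<bar> > t \<Longrightarrow> adapt_soft_thr b t = b * (1 - t\<^sup>2 / b\<^sup>2) \<and> 0 < 1 - t\<^sup>2 / b\<^sup>2 \<and> 1 - t\<^sup>2 / b\<^sup>2 \<le> 1"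
proof -
  assume h: "\<bar>b\<bar> \<le> t"
  show "adapt_soft_thr b t = 0"
  proof (cases "b = 0")
    case True then show ?thesis by (simp add: adapt_soft_thr_def)
  next
    case False
    have "\<bar>b\<bar>\<^sup>2 \<le> t\<^sup>2" by (rule power_mono) (use h in auto)
    then have "b\<^sup>2 \<le> t\<^sup>2" by simp
    then have "t\<^sup>2 / b\<^sup>2 \<ge> 1" using False by (simp add: le_divide_eq)
    then show ?thesis by (simp add: adapt_soft_thr_def)
  qed
next
  assume h: "\<bar>b\<bar> > t"
  then have b: "b \<noteq> 0" using t by auto
  have "t\<^sup>2 < \<bar>b\<bar>\<^sup>2" by (rule power_strict_mono) (use h t in auto)
  then have "b\<^sup>2 > t\<^sup>2" by simp
  then have "t\<^sup>2 / b\<^sup>2 < 1" using b by (simp add: divide_less_eq)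
  moreover have "t\<^sup>2 / b\<^sup>2 \<ge> 0" by simp
  ultimately show "adapt_soft_thr b t = b * (1 - t\<^sup>2 / b\<^sup>2) \<and> 0 < 1 - t\<^sup>2 / b\<^sup>2 \<and> 1 - t\<^sup>2 / b\<^sup>2 \<le> 1"
    by (simp add: adapt_soft_thr_def)
qed

lemma as_close:
  assumes t: "t > 0" and h: "\<bar>b\<bar> > t"
  shows "\<bar>adapt_soft_thr b t - b\<bar> \<le> t"
proof -
  have b: "b \<noteq> 0" using h t by auto
  have "b * (1 - t\<^sup>2 / b\<^sup>2) - b = - (t\<^sup>2 / b)"
    using b by (simp add: field_simps power2_eq_square)
  then have "adapt_soft_thr b t - b = - (t\<^sup>2 / b)"
    using as_cases(2)[OF t h] by simp
  then have "\<bar>adapt_soft_thr b t - b\<bar> = t\<^sup>2 / \<bar>b\<bar>" by (simp add: abs_divide)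
  also have "\<dots> \<le> t\<^sup>2 / t" using h t by (intro divide_left_mono) auto
  also have "\<dots> = t" using t by (simp add: power2_eq_square)
  finally show ?thesis .
qed

lemma est_props:
  assumes est: "est \<in> {hard_thr, soft_thr, adapt_soft_thr}" and t: "t > 0"
  shows est_close: "\<bar>est b t - b\<bar> \<le> t"
    and est_pos: "b \<ge> 0 \<Longrightarrow> 0 \<le> est b t \<and> est b t \<le> b"
    and est_neg: "b \<le> 0 \<Longrightarrow> b \<le> est b t \<and> est b t \<le> 0"
    and est_gt: "est b t > 0 \<Longrightarrow> b > t"
proof -
  have A: "\<bar>adapt_soft_thr b t - b\<bar> \<le> t"
    using as_close[OF t] as_cases(1)[OF t] by (cases "\<bar>b\<bar> > t") auto
  have Apos: "b \<ge> 0 \<Longrightarrow> 0 \<le> adapt_soft_thr b t \<and> adapt_soft_thr b t \<le> b"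
  proof -
    assume b: "b \<ge> 0"
    show ?thesis
    proof (cases "\<bar>b\<bar> > t")
      case True
      then obtain m where "adapt_soft_thr b t = b * m" "0 < m" "m \<le> 1" using as_cases(2)[OF t] by blast
      then show ?thesis using b mult_left_le[of m b] by simp
    qed (use as_cases(1)[OF t] b in auto)
  qed
  have Aneg: "b \<le> 0 \<Longrightarrow> b \<le> adapt_soft_thr b t \<and> adapt_soft_thr b t \<le> 0"
  proof -
    assume b: "b \<le> 0"
    show ?thesis
    proof (cases "\<bar>b\<bar> > t")
      case True
      then obtain m where "adapt_soft_thr b t = b * m" "0 < m" "m \<le> 1" using as_cases(2)[OF t] by blast
      moreover have "b * (1 - m) \<le> 0" using b \<open>m \<le> 1\<close> by (intro mult_nonpos_nonneg) auto
      moreover have "b * m \<le> 0" using b \<open>0 < m\<close> by (intro mult_nonpos_nonneg) auto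
      ultimately show ?thesis by (simp add: algebra_simps)
    qed (use as_cases(1)[OF t] b in auto)
  qed
  have Agt: "adapt_soft_thr b t > 0 \<Longrightarrow> b > t"
  proof -
    assume p: "adapt_soft_thr b t > 0"
    show "b > t"
    proof (cases "\<bar>b\<bar> > t")
      case True
      then obtain m where "adapt_soft_thr b t = b * m" "0 < m" "m \<le> 1" using as_cases(2)[OF t] by blast
      then have "b > 0" using p by (simp add: zero_less_mult_iff)
      then show ?thesis using True by simp
    qed (use as_cases(1)[OF t] p in auto)
  qed
  show "\<bar>est b t - b\<bar> \<le> t"
    using est A t by (auto simp: hard_thr_def soft_thr_def sgn_if)
  show "b \<ge> 0 \<Longrightarrow> 0 \<le> est b t \<and> est b t \<le> b"
    using est Apos t by (auto simp: hard_thr_def soft_thr_def sgn_if)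
  show "b \<le> 0 \<Longrightarrow> b \<le> est b t \<and> est b t \<le> 0"
    using est Aneg t by (auto simp: hard_thr_def soft_thr_def sgn_if)
  show "est b t > 0 \<Longrightarrow> b > t"
    using est Agt t by (auto simp: hard_thr_def soft_thr_def sgn_if split: if_splits)
qed

lemma est_meas:
  assumes est: "est \<in> {hard_thr, soft_thr, adapt_soft_thr}"
  shows "(\<lambda>b. est b t) \<in> borel_measurable borel"
  using est unfolding hard_thr_def soft_thr_def adapt_soft_thr_def by auto

lemma per_n:
  fixes X :: "real mat"
  assumes X: "X \<in> carrier_mat n k" and r: "vec_space.rank n X = k" and i: "i < k" and n: "n > 0"
    and s: "\<sigma> > 0" and eta: "\<eta> > 0" and est: "est \<in> {hard_thr, soft_thr, adapt_soft_thr}"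
    and d: "d \<ge> 0"
  shows "\<forall>\<theta>\<in>carrier_vec k. 0 \<le> coverage est X n \<sigma> \<eta> d i \<theta> \<and> coverage est X n \<sigma> \<eta> d i \<theta> \<le> 1"
    and "1 \<le> d \<Longrightarrow> \<forall>\<theta>\<in>carrier_vec k.
           min (Phi (sqrt (real n) * \<eta>) - Phi 0) (Phi 0 - Phi (- (sqrt (real n) * \<eta>)))
             \<le> coverage est X n \<sigma> \<eta> d i \<theta>"
    and "1 < d \<Longrightarrow> \<forall>\<theta>\<in>carrier_vec k.
           Phi ((d - 1) * (sqrt (real n) * \<eta>)) - Phi (- ((d - 1) * (sqrt (real n) * \<eta>)))
             \<le> coverage est X n \<sigma> \<eta> d i \<theta>"
    and "y < (1 - d) * (sqrt (real n) * \<eta>) \<Longrightarrow>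
           \<exists>\<theta>\<in>carrier_vec k. coverage est X n \<sigma> \<eta> d i \<theta> \<le> 1 - Phi y"
proof -
  define rr where "rr = sqrt (real n) * \<eta>"
  have rr: "rr > 0" using n eta by (simp add: rr_def)
  obtain A where Ainv: "mat_inverse (transpose_mat X * X) = Some A" and A: "A \<in> carrier_mat k k"
    and GA: "transpose_mat X * X * A = 1\<^sub>m k" and AG: "A * (transpose_mat X * X) = 1\<^sub>m k"
    using gram_inverse[OF X r] by blast
  define c where "c j = (A * transpose_mat X) $$ (i, j)" for j
  define a where "a = A $$ (i, i)"
  have ca: "(\<Sum>j<n. (c j)\<^sup>2) = a" and cnz: "\<exists>j<n. c j \<noteq> 0"
    using var_eq[OF X A AG i] by (simp_all add: c_def a_def)
  have apos: "a > 0"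
  proof -
    obtain j where "j < n" "c j \<noteq> 0" using cnz by blast
    then have "0 < (\<Sum>j<n. (c j)\<^sup>2)"
      by (intro sum_pos2[of _ j]) auto
    then show ?thesis using ca by simp
  qed
  have xi: "xi X n i = sqrt (real n * a)"
    using xi_eq[OF X n A GA AG gram_det[OF X r] i] by (simp add: a_def)
  define t where "t = \<sigma> * xi X n i * \<eta>"
  define sd where "sd = \<sigma> * sqrt a"
  have sd: "sd > 0" using s apos by (simp add: sd_def)
  have t_eq: "t = sd * rr" unfolding t_def sd_def rr_def xi by (simp add: real_sqrt_mult ac_simps)
  have t: "t > 0" using sd rr t_eq by simp
  define W where "W u = (\<Sum>j<n. c j * u j)" for u :: "nat \<Rightarrow> real"
  define Z where "Z u = W u / sd" for u
  let ?M = "noise n \<sigma>"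
  interpret M: prob_space ?M using noise_prob[OF s] .
  have Wd: "distributed ?M lborel W (normal_density 0 sd)"
    using lincomb_normal[OF s cnz] unfolding W_def[abs_def] sd_def ca .
  have "distributed ?M lborel (\<lambda>u. (W u - 0) / sd) std_normal_density"
    using M.normal_standard_normal_convert[OF sd] Wd by blast
  then have Zd: "distributed ?M lborel Z std_normal_density" by (simp add: Z_def[abs_def])
  then have Zdistr: "distr ?M lborel Z = SN" and Zm: "Z \<in> measurable ?M lborel"
    unfolding distributed_def by auto
  define Q where "Q x b \<longleftrightarrow> est b t - d * t \<le> x \<and> x \<le> est b t + d * t" for x b
  define g where "g x = measure SN {z. Q x (x + sd * z)}" for x
  have Sx: "{z. Q x (x + sd * z)} \<in> sets borel" for x
  proof -
    have m: "(\<lambda>z. est (x + sd * z) t) \<in> borel_measurable borel"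
      using measurable_compose[of "\<lambda>z. x + sd * z" borel borel, OF _ est_meas[OF est]] by simp
    show ?thesis unfolding Q_def using m by measurable
  qed
  have cov: "coverage est X n \<sigma> \<eta> d i \<theta> = g (\<theta> $ i)" if th: "\<theta> \<in> carrier_vec k" for \<theta>
  proof -
    have b: "vec_index (ls_est X (mult_mat_vec X \<theta> + Matrix.vec n u)) i = \<theta> $ i + sd * Z u" for u
      using ls_decomp[OF X A Ainv AG th i, of u] sd by (simp add: Z_def W_def c_def)
    have "coverage est X n \<sigma> \<eta> d i \<theta> = measure ?M {u \<in> space ?M. Q (\<theta> $ i) (\<theta> $ i + sd * Z u)}"
      unfolding coverage_def Let_def b Q_def t_def by (simp add: ac_simps)
    also have "{u \<in> space ?M. Q (\<theta> $ i) (\<theta> $ i + sd * Z u)} = Z -` {z. Q (\<theta> $ i) (\<theta> $ i + sd * z)} \<inter> space ?M"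
      by auto
    also have "measure ?M \<dots> = measure (distr ?M lborel Z) {z. Q (\<theta> $ i) (\<theta> $ i + sd * z)}"
      by (rule measure_distr[symmetric]) (use Zm Sx in auto)
    finally show ?thesis using Zdistr by (simp add: g_def)
  qed
  show "\<forall>\<theta>\<in>carrier_vec k. 0 \<le> coverage est X n \<sigma> \<eta> d i \<theta> \<and> coverage est X n \<sigma> \<eta> d i \<theta> \<le> 1"
    using cov by (simp add: g_def SN.prob_le_1)
  show "1 \<le> d \<Longrightarrow> \<forall>\<theta>\<in>carrier_vec k.
           min (Phi (sqrt (real n) * \<eta>) - Phi 0) (Phi 0 - Phi (- (sqrt (real n) * \<eta>)))
             \<le> coverage est X n \<sigma> \<eta> d i \<theta>"
  proof (intro ballI)
    fix \<theta> :: "real vec" assume d1: "1 \<le> d" and th: "\<theta> \<in> carrier_vec k"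
    define x where "x = \<theta> $ i"
    have dt: "t \<le> d * t" using d1 t by simp
    have "min (Phi rr - Phi 0) (Phi 0 - Phi (- rr)) \<le> g x"
    proof (cases "x \<ge> 0")
      case True
      have sub: "{0<..rr} \<subseteq> {z. Q x (x + sd * z)}"
      proof
        fix z assume z: "z \<in> {0<..rr}"
        define b where "b = x + sd * z"
        have "b \<ge> x" "b \<le> x + t" using z sd t_eq by (auto simp: b_def mult_left_mono)
        moreover have "0 \<le> est b t \<and> est b t \<le> b" using est_pos[OF est t] True \<open>b \<ge> x\<close> by auto
        moreover have "\<bar>est b t - b\<bar> \<le> t" using est_close[OF est t] .
        ultimately show "z \<in> {z. Q x (x + sd * z)}" using dt by (auto simp: Q_def b_def[symmetric])
      qed
      have "Phi rr - Phi 0 = measure SN {0<..rr}" using Phi_diff rr by simp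
      also have "\<dots> \<le> g x" unfolding g_def by (rule SN.finite_measure_mono[OF sub]) (use Sx in simp)
      finally show ?thesis by simp
    next
      case False
      have sub: "{-rr<..0} \<subseteq> {z. Q x (x + sd * z)}"
      proof
        fix z assume z: "z \<in> {-rr<..0}"
        define b where "b = x + sd * z"
        have "sd * z \<le> 0" using z sd by (intro mult_nonneg_nonpos) auto
        moreover have "sd * (- rr) \<le> sd * z" using z sd by (intro mult_left_mono) auto
        ultimately have "b \<le> x" "b \<ge> x - t" using t_eq by (auto simp: b_def)
        moreover have "b \<le> est b t \<and> est b t \<le> 0" using est_neg[OF est t] False \<open>b \<le> x\<close> by auto
        moreover have "\<bar>est b t - b\<bar> \<le> t" using est_close[OF est t] .
        ultimately show "z \<in> {z. Q x (x + sd * z)}" using dt False by (auto simp: Q_def b_def[symmetric])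
      qed
      have "Phi 0 - Phi (-rr) = measure SN {-rr<..0}" using Phi_diff rr by simp
      also have "\<dots> \<le> g x" unfolding g_def by (rule SN.finite_measure_mono[OF sub]) (use Sx in simp)
      finally show ?thesis by simp
    qed
    then show "min (Phi (sqrt (real n) * \<eta>) - Phi 0) (Phi 0 - Phi (- (sqrt (real n) * \<eta>)))
             \<le> coverage est X n \<sigma> \<eta> d i \<theta>" using cov[OF th] by (simp add: x_def rr_def)
  qed
  show "1 < d \<Longrightarrow> \<forall>\<theta>\<in>carrier_vec k.
           Phi ((d - 1) * (sqrt (real n) * \<eta>)) - Phi (- ((d - 1) * (sqrt (real n) * \<eta>)))
             \<le> coverage est X n \<sigma> \<eta> d i \<theta>"
  proof (intro ballI)
    fix \<theta> :: "real vec" assume d1: "1 < d" and th: "\<theta> \<in> carrier_vec k"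
    define x where "x = \<theta> $ i"
    define R where "R = (d - 1) * rr"
    have R: "R > 0" using d1 rr by (simp add: R_def)
    have sub: "{-R<..R} \<subseteq> {z. Q x (x + sd * z)}"
    proof
      fix z assume z: "z \<in> {-R<..R}"
      define b where "b = x + sd * z"
      have "\<bar>sd * z\<bar> \<le> sd * R" using z sd by (auto simp: abs_mult intro!: mult_left_mono)
      moreover have "sd * R = (d - 1) * t" using t_eq by (simp add: R_def)
      ultimately have "\<bar>b - x\<bar> \<le> (d - 1) * t" by (simp add: b_def)
      moreover have "\<bar>est b t - b\<bar> \<le> t" using est_close[OF est t] .
      ultimately show "z \<in> {z. Q x (x + sd * z)}" by (auto simp: Q_def b_def[symmetric] algebra_simps)
    qed
    have "Phi R - Phi (-R) = measure SN {-R<..R}" using Phi_diff R by simp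
    also have "\<dots> \<le> g x" unfolding g_def by (rule SN.finite_measure_mono[OF sub]) (use Sx in simp)
    finally show "Phi ((d - 1) * (sqrt (real n) * \<eta>)) - Phi (- ((d - 1) * (sqrt (real n) * \<eta>)))
             \<le> coverage est X n \<sigma> \<eta> d i \<theta>" using cov[OF th] by (simp add: x_def rr_def R_def)
  qed
  show "y < (1 - d) * (sqrt (real n) * \<eta>) \<Longrightarrow>
           \<exists>\<theta>\<in>carrier_vec k. coverage est X n \<sigma> \<eta> d i \<theta> \<le> 1 - Phi y"
  proof -
    assume y: "y < (1 - d) * (sqrt (real n) * \<eta>)"
    define x where "x = t - sd * y"
    define \<theta> where "\<theta> = Matrix.vec k (\<lambda>j. if j = i then x else 0)"
    have th: "\<theta> \<in> carrier_vec k" by (simp add: \<theta>_def)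
    have thi: "\<theta> $ i = x" using i by (simp add: \<theta>_def)
    have "sd * y < sd * ((1 - d) * rr)" using y sd by (simp add: rr_def)
    then have xdt: "x - d * t > 0" using t_eq by (simp add: x_def algebra_simps)
    have sub: "{z. Q x (x + sd * z)} \<subseteq> {y<..}"
    proof
      fix z assume "z \<in> {z. Q x (x + sd * z)}"
      then have "est (x + sd * z) t > 0" using xdt by (simp add: Q_def)
      then have "x + sd * z > t" using est_gt[OF est t] by blast
      then have "sd * z > sd * y" by (simp add: x_def)
      then show "z \<in> {y<..}" using sd by simp
    qed
    have "g x \<le> measure SN {y<..}" unfolding g_def by (rule SN.finite_measure_mono[OF sub]) simp
    also have "\<dots> = 1 - Phi y" by (rule Phi_upper)
    finally have "coverage est X n \<sigma> \<eta> d i \<theta> \<le> 1 - Phi y" using cov[OF th] thi by simp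
    then show ?thesis using th by blast
  qed
qed

lemma Phi_rr_gen: assumes rr_top: "filterlim (rr :: nat \<Rightarrow> real) at_top sequentially" and c: "(c::real) > 0"
  shows "(\<lambda>n. Phi (c * rr n)) \<longlonglongrightarrow> 1"
  by (rule filterlim_compose[OF Phi_top filterlim_tendsto_pos_mult_at_top[OF tendsto_const c rr_top]])
lemma Phi_mrr_gen: assumes rr_top: "filterlim (rr :: nat \<Rightarrow> real) at_top sequentially" and c: "(c::real) > 0"
  shows "(\<lambda>n. Phi (- (c * rr n))) \<longlonglongrightarrow> 0"
  by (rule filterlim_compose[OF Phi_bot filterlim_uminus_at_top[THEN iffD1,
          OF filterlim_tendsto_pos_mult_at_top[OF tendsto_const c rr_top]]])

lemma ev_good:
  fixes X :: "nat \<Rightarrow> real mat" and k :: "nat \<Rightarrow> nat"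
  assumes model: "\<forall>\<^sub>F n in sequentially.
      X n \<in> carrier_mat n (k n) \<and> k n \<ge> 1 \<and> vec_space.rank n (X n) = k n"
    and i_le_k: "\<forall>\<^sub>F n in sequentially. i < k n"
  shows "\<forall>\<^sub>F n in sequentially. X n \<in> carrier_mat n (k n) \<and> vec_space.rank n (X n) = k n \<and> i < k n \<and> n > 0"
  using model i_le_k eventually_gt_at_top[of 0]
  by eventually_elim auto

lemma INF_bounds:
  fixes f :: "'a \<Rightarrow> real"
  assumes b: "\<forall>\<theta>\<in>A. 0 \<le> f \<theta> \<and> f \<theta> \<le> 1" and ne: "A \<noteq> {}"
  shows INF_lowerI: "(\<forall>\<theta>\<in>A. L \<le> f \<theta>) \<Longrightarrow> L \<le> (INF \<theta>\<in>A. f \<theta>)"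
    and INF_upperI: "\<theta> \<in> A \<Longrightarrow> f \<theta> \<le> U \<Longrightarrow> (INF \<theta>\<in>A. f \<theta>) \<le> U"
    and INF_ge0: "0 \<le> (INF \<theta>\<in>A. f \<theta>)"
    and INF_le1: "(INF \<theta>\<in>A. f \<theta>) \<le> 1"
proof -
  have bdd: "bdd_below (f ` A)" using b by (auto intro!: bdd_belowI[of _ 0])
  show "(\<forall>\<theta>\<in>A. L \<le> f \<theta>) \<Longrightarrow> L \<le> (INF \<theta>\<in>A. f \<theta>)"
    using ne by (simp add: cINF_greatest)
  show "\<theta> \<in> A \<Longrightarrow> f \<theta> \<le> U \<Longrightarrow> (INF \<theta>\<in>A. f \<theta>) \<le> U"
    using bdd by (rule cINF_lower2)
  show "0 \<le> (INF \<theta>\<in>A. f \<theta>)" using ne b by (simp add: cINF_greatest)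
  obtain \<theta> where "\<theta> \<in> A" using ne by blast
  then show "(INF \<theta>\<in>A. f \<theta>) \<le> 1" using bdd b by (meson cINF_lower2)
qed

theorem proposition13:
  fixes X :: "nat \<Rightarrow> real mat" and k :: "nat \<Rightarrow> nat"
    and \<sigma> :: real and \<eta> :: "nat \<Rightarrow> nat \<Rightarrow> real" and i :: nat and d :: real
    and est :: "real \<Rightarrow> real \<Rightarrow> real"
  assumes model: "\<forall>\<^sub>F n in sequentially.
      X n \<in> carrier_mat n (k n) \<and> k n \<ge> 1 \<and> vec_space.rank n (X n) = k n"
    and standing: "\<And>j. (\<forall>\<^sub>F n in sequentially. j < k n) \<Longrightarrow>
      (\<exists>C. \<forall>n. n \<ge> 1 \<and> X n \<in> carrier_mat n (k n) \<and> vec_space.rank n (X n) = k n \<and> j < k n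
              \<longrightarrow> (xi (X n) n j)\<^sup>2 / real n \<le> C)"
    and sigma_pos: "\<sigma> > 0"
    and eta_pos: "\<And>j n. \<eta> j n > 0"
    and i_le_k: "\<forall>\<^sub>F n in sequentially. i < k n"
    and lim1: "(\<lambda>n. xi (X n) n i * \<eta> i n) \<longlonglongrightarrow> 0"
    and lim2: "filterlim (\<lambda>n. sqrt (real n) * \<eta> i n) at_top sequentially"
    and est: "est \<in> {hard_thr, soft_thr, adapt_soft_thr}"
    and d_nonneg: "d \<ge> 0"
  shows "(\<lambda>n. INF \<theta>\<in>carrier_vec (k n). coverage est (X n) n \<sigma> (\<eta> i n) d i \<theta>)
           \<longlonglongrightarrow> (if d > 1 then 1 else if d = 1 then 1 / 2 else 0)"
proof -
  define F where "F = (\<lambda>n. INF \<theta>\<in>carrier_vec (k n). coverage est (X n) n \<sigma> (\<eta> i n) d i \<theta>)"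
  define rr where "rr = (\<lambda>n. sqrt (real n) * \<eta> i n)"
  have ev: "\<forall>\<^sub>F n in sequentially. X n \<in> carrier_mat n (k n) \<and> vec_space.rank n (X n) = k n \<and> i < k n \<and> n > 0"
    by (rule ev_good[OF model i_le_k])
  have rr_top: "filterlim rr at_top sequentially" using lim2 by (simp add: rr_def)
  have rr_pos: "rr n > 0" if "n > 0" for n using that eta_pos[of i n] by (simp add: rr_def)
  have ne: "(carrier_vec (k n) :: real vec set) \<noteq> {}" for n using zero_carrier_vec by blast
  have B: "\<forall>\<theta>\<in>carrier_vec (k n). 0 \<le> coverage est (X n) n \<sigma> (\<eta> i n) d i \<theta> \<and> coverage est (X n) n \<sigma> (\<eta> i n) d i \<theta> \<le> 1"
    if "X n \<in> carrier_mat n (k n)" "vec_space.rank n (X n) = k n" "i < k n" "n > 0" for n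
    using per_n(1)[OF that sigma_pos eta_pos est d_nonneg] .
  have ge0: "0 \<le> F n" and le1: "F n \<le> 1"
    if "X n \<in> carrier_mat n (k n)" "vec_space.rank n (X n) = k n" "i < k n" "n > 0" for n
    unfolding F_def using INF_ge0[OF B[OF that] ne] INF_le1[OF B[OF that] ne] by auto
  show ?thesis
  proof (cases "d > 1")
    case True
    define L where "L = (\<lambda>n. Phi ((d - 1) * rr n) - Phi (- ((d - 1) * rr n)))"
    have L1: "L \<longlonglongrightarrow> 1 - 0" unfolding L_def
      using True by (intro tendsto_diff Phi_rr_gen[OF rr_top] Phi_mrr_gen[OF rr_top]) auto
    have e1: "\<forall>\<^sub>F n in sequentially. L n \<le> F n"
      using ev
    proof (rule eventually_mono)
      fix n assume h: "X n \<in> carrier_mat n (k n) \<and> vec_space.rank n (X n) = k n \<and> i < k n \<and> n > 0"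
      then have h': "X n \<in> carrier_mat n (k n)" "vec_space.rank n (X n) = k n" "i < k n" "n > 0" by auto
      have "\<forall>\<theta>\<in>carrier_vec (k n). L n \<le> coverage est (X n) n \<sigma> (\<eta> i n) d i \<theta>"
        using per_n(3)[OF h' sigma_pos eta_pos est d_nonneg True] by (simp add: L_def rr_def)
      then show "L n \<le> F n" unfolding F_def by (rule INF_lowerI[OF B[OF h'] ne])
    qed
    have e2: "\<forall>\<^sub>F n in sequentially. F n \<le> 1"
      using ev by (rule eventually_mono) (intro le1; simp)
    have "F \<longlonglongrightarrow> 1" using tendsto_sandwich[OF e1 e2 _ tendsto_const] L1 by simp
    then show ?thesis using True by (simp add: F_def)
  next
    case False
    show ?thesis
    proof (cases "d = 1")
      case d1: True
      define L where "L = (\<lambda>n. min (Phi (1 * rr n) - Phi 0) (Phi 0 - Phi (- (1 * rr n))))"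
      define U where "U = (\<lambda>n. 1 - Phi (- inverse (real (Suc n))))"
      have "(\<lambda>n. Phi (1 * rr n)) \<longlonglongrightarrow> 1" by (rule Phi_rr_gen[OF rr_top]) simp
      moreover have "(\<lambda>n. Phi (- (1 * rr n))) \<longlonglongrightarrow> 0" by (rule Phi_mrr_gen[OF rr_top]) simp
      ultimately have "L \<longlonglongrightarrow> min (1 - Phi 0) (Phi 0 - 0)" unfolding L_def
        by (intro tendsto_min tendsto_diff tendsto_const)
      then have L: "L \<longlonglongrightarrow> 1 / 2" by (simp add: Phi_0)
      have "(\<lambda>n. - inverse (real (Suc n))) \<longlonglongrightarrow> - 0"
        by (intro tendsto_minus LIMSEQ_inverse_real_of_nat)
      then have "(\<lambda>n. Phi (- inverse (real (Suc n)))) \<longlonglongrightarrow> Phi (- 0)"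
        by (rule isCont_tendsto_compose[OF Phi_cont])
      then have "U \<longlonglongrightarrow> 1 - Phi (- 0)" unfolding U_def by (rule tendsto_diff[OF tendsto_const])
      then have U: "U \<longlonglongrightarrow> 1 / 2" by (simp add: Phi_0)
      have e1: "\<forall>\<^sub>F n in sequentially. L n \<le> F n"
        using ev
      proof (rule eventually_mono)
        fix n assume h: "X n \<in> carrier_mat n (k n) \<and> vec_space.rank n (X n) = k n \<and> i < k n \<and> n > 0"
        then have h': "X n \<in> carrier_mat n (k n)" "vec_space.rank n (X n) = k n" "i < k n" "n > 0" by auto
        have "\<forall>\<theta>\<in>carrier_vec (k n). L n \<le> coverage est (X n) n \<sigma> (\<eta> i n) d i \<theta>"
          using per_n(2)[OF h' sigma_pos eta_pos est d_nonneg] d1 by (simp add: L_def rr_def)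
        then show "L n \<le> F n" unfolding F_def by (rule INF_lowerI[OF B[OF h'] ne])
      qed
      have e2: "\<forall>\<^sub>F n in sequentially. F n \<le> U n"
        using ev
      proof (rule eventually_mono)
        fix n assume h: "X n \<in> carrier_mat n (k n) \<and> vec_space.rank n (X n) = k n \<and> i < k n \<and> n > 0"
        then have h': "X n \<in> carrier_mat n (k n)" "vec_space.rank n (X n) = k n" "i < k n" "n > 0" by auto
        have "- inverse (real (Suc n)) < (1 - d) * (sqrt (real n) * \<eta> i n)" using d1 by simp
        then obtain \<theta> where th: "\<theta> \<in> carrier_vec (k n)"
          "coverage est (X n) n \<sigma> (\<eta> i n) d i \<theta> \<le> 1 - Phi (- inverse (real (Suc n)))"
          using per_n(4)[OF h' sigma_pos eta_pos est d_nonneg] by blast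
        show "F n \<le> U n" unfolding F_def U_def by (rule INF_upperI[OF B[OF h'] ne th])
      qed
      have "F \<longlonglongrightarrow> 1 / 2" by (rule tendsto_sandwich[OF e1 e2 L U])
      then show ?thesis using False d1 by (simp add: F_def)
    next
      case d1: False
      then have dl: "d < 1" using False by simp
      define U where "U = (\<lambda>n. 1 - Phi ((1 - d) / 2 * rr n))"
      have "(\<lambda>n. Phi ((1 - d) / 2 * rr n)) \<longlonglongrightarrow> 1" by (rule Phi_rr_gen[OF rr_top]) (use dl in simp)
      then have "U \<longlonglongrightarrow> 1 - 1" unfolding U_def by (rule tendsto_diff[OF tendsto_const])
      then have U: "U \<longlonglongrightarrow> 0" by simp
      have e2: "\<forall>\<^sub>F n in sequentially. F n \<le> U n"
        using ev
      proof (rule eventually_mono)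
        fix n assume h: "X n \<in> carrier_mat n (k n) \<and> vec_space.rank n (X n) = k n \<and> i < k n \<and> n > 0"
        then have h': "X n \<in> carrier_mat n (k n)" "vec_space.rank n (X n) = k n" "i < k n" "n > 0" by auto
        have "rr n > 0" using rr_pos h'(4) by blast
        then have "(1 - d) / 2 * rr n < (1 - d) * rr n" using dl by simp
        then have "(1 - d) / 2 * rr n < (1 - d) * (sqrt (real n) * \<eta> i n)" by (simp add: rr_def)
        then obtain \<theta> where th: "\<theta> \<in> carrier_vec (k n)"
          "coverage est (X n) n \<sigma> (\<eta> i n) d i \<theta> \<le> 1 - Phi ((1 - d) / 2 * rr n)"
          using per_n(4)[OF h' sigma_pos eta_pos est d_nonneg] by blast
        show "F n \<le> U n" unfolding F_def U_def by (rule INF_upperI[OF B[OF h'] ne th])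
      qed
      have e1: "\<forall>\<^sub>F n in sequentially. 0 \<le> F n"
        using ev by (rule eventually_mono) (intro ge0; simp)
      have "F \<longlonglongrightarrow> 0" by (rule tendsto_sandwich[OF e1 e2 tendsto_const U])
      then show ?thesis using False d1 by (simp add: F_def)
    qed
  qed
qed

end
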